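(* Let $\mathcal L$ be a factorial and almost prolongable language over a finite alphabet, and suppose there is a real number $\alpha\ge1$ with $p(n)\sim n^\alpha$. Then the Rauzy digraphs $\vec R(n)$ of $\mathcal L$ converge to $\vec{\mathbf Z}$ in the Benjamini–Schramm sense.
   Context: $p(n)=|\mathcal L\cap\mathcal A^n|$; $f\sim g$ means $f(n)/g(n)\to1$. $\mathcal L$ is factorial if every subword of a word of $\mathcal L$ lies in $\mathcal L$; a word $v\in\mathcal L$ is left-prolongable (resp. right-prolongable) if $av\in\mathcal L$ (resp. $va\in\mathcal L$) for some letter $a$; $\mathcal L$ is almost prolongable if the proportions of left-prolongable and of right-prolongable words among words of length $n$ in $\mathcal L$ both tend to $1$. The Rauzy digraph $\vec R(n)$ has vertex set $\mathcal L\cap\mathcal A^n$ and, for each $aub\in\mathcal L\cap\mathcal A^{n+1}$ ($a,b$ letters), one arc from $au$ to $ub$. Convergence to $\vec{\mathbf Z}$ means: for each $r$, the proportion of vertices whose ball of radius $r$ is isomorphic to the ball of radius $r$ in the bi-infinite directed path (arcs $i\to i+1$) tends to $1$. *)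

theory Defs
  imports Complex_Main
begin

definition words_of_length :: "'a list set \<Rightarrow> nat \<Rightarrow> 'a list set" where
  "words_of_length L n = {w \<in> L. length w = n}"

definition complexity :: "'a list set \<Rightarrow> nat \<Rightarrow> nat" where
  "complexity L n = card (words_of_length L n)"

definition factorial_lang :: "'a list set \<Rightarrow> bool" where
  "factorial_lang L \<longleftrightarrow> (\<forall>w \<in> L. \<forall>u x v. w = u @ x @ v \<longrightarrow> x \<in> L)"

definition left_prolongable :: "'a set \<Rightarrow> 'a list set \<Rightarrow> 'a list \<Rightarrow> bool" where
  "left_prolongable A L v \<longleftrightarrow> (\<exists>a \<in> A. a # v \<in> L)"

definition right_prolongable :: "'a set \<Rightarrow> 'a list set \<Rightarrow> 'a list \<Rightarrow> bool" where
  "right_prolongable A L v \<longleftrightarrow> (\<exists>a \<in> A. v @ [a] \<in> L)"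

definition almost_prolongable :: "'a set \<Rightarrow> 'a list set \<Rightarrow> bool" where
  "almost_prolongable A L \<longleftrightarrow>
     (\<lambda>n. real (card {v \<in> words_of_length L n. left_prolongable A L v}) / real (complexity L n))
        \<longlonglongrightarrow> 1 \<and>
     (\<lambda>n. real (card {v \<in> words_of_length L n. right_prolongable A L v}) / real (complexity L n))
        \<longlonglongrightarrow> 1"

text \<open>Rauzy digraph of order n: vertices are the words of length n of L; there is an arc
  from au to ub for each word aub of length n+1 in L. Since aub is determined by the pair
  (au, ub), the arcs form a relation (possibly with loops).\<close>

definition rauzy_arc :: "'a list set \<Rightarrow> nat \<Rightarrow> 'a list \<Rightarrow> 'a list \<Rightarrow> bool" where
  "rauzy_arc L n v w \<longleftrightarrow>
     (\<exists>x \<in> words_of_length L (Suc n). v = take n x \<and> w = drop 1 x)"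

definition rauzy_ball :: "'a list set \<Rightarrow> nat \<Rightarrow> 'a list \<Rightarrow> nat \<Rightarrow> 'a list set" where
  "rauzy_ball L n v r =
     {w. \<exists>k \<le> r. (v, w) \<in> ({(x, y). rauzy_arc L n x y \<or> rauzy_arc L n y x}) ^^ k}"

text \<open>The ball of radius r around v is isomorphic (as a rooted digraph) to the ball of radius r
  around 0 in the bi-infinite directed path with arcs i \<rightarrow> i+1, i.e. to the path on
  {-r..r} rooted at 0.\<close>

definition ball_is_path :: "'a list set \<Rightarrow> nat \<Rightarrow> 'a list \<Rightarrow> nat \<Rightarrow> bool" where
  "ball_is_path L n v r \<longleftrightarrow>
     (\<exists>f :: int \<Rightarrow> 'a list.
        bij_betw f {- int r .. int r} (rauzy_ball L n v r) \<and> f 0 = v \<and>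
        (\<forall>i \<in> {- int r .. int r}. \<forall>j \<in> {- int r .. int r}.
            rauzy_arc L n (f i) (f j) \<longleftrightarrow> j = i + 1))"

definition rauzy_converges_to_Z :: "'a list set \<Rightarrow> bool" where
  "rauzy_converges_to_Z L \<longleftrightarrow>
     (\<forall>r. (\<lambda>n. real (card {v \<in> words_of_length L n. ball_is_path L n v r})
                 / real (complexity L n)) \<longlonglongrightarrow> 1)"

end

theory Submission
  imports Defs
begin


abbreviation W where "W L n \<equiv> words_of_length L n"

definition outs :: "'a list set \<Rightarrow> nat \<Rightarrow> 'a list \<Rightarrow> 'a list set" where
  "outs L n u = {w. rauzy_arc L n u w}"
definition ins :: "'a list set \<Rightarrow> nat \<Rightarrow> 'a list \<Rightarrow> 'a list set" where
  "ins L n w = {u. rauzy_arc L n u w}"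
definition good :: "'a list set \<Rightarrow> nat \<Rightarrow> 'a list \<Rightarrow> bool" where
  "good L n u \<longleftrightarrow> card (outs L n u) = 1 \<and> card (ins L n u) = 1"
definition succ :: "'a list set \<Rightarrow> nat \<Rightarrow> 'a list \<Rightarrow> 'a list" where
  "succ L n u = (THE w. rauzy_arc L n u w)"
definition pred :: "'a list set \<Rightarrow> nat \<Rightarrow> 'a list \<Rightarrow> 'a list" where
  "pred L n w = (THE u. rauzy_arc L n u w)"
definition nbr :: "'a list set \<Rightarrow> nat \<Rightarrow> ('a list \<times> 'a list) set" where
  "nbr L n = {(x, y). rauzy_arc L n x y \<or> rauzy_arc L n y x}"

lemma ball_def2: "rauzy_ball L n v r = {w. \<exists>k\<le>r. (v, w) \<in> nbr L n ^^ k}"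
  unfolding rauzy_ball_def nbr_def by simp

lemma arc_nth: "rauzy_arc L n u w \<Longrightarrow> Suc k < n \<Longrightarrow> w ! k = u ! Suc k"
  unfolding rauzy_arc_def words_of_length_def by auto

lemma arc_in:
  assumes "factorial_lang L" "rauzy_arc L n u w"
  shows "u \<in> W L n \<and> w \<in> W L n"
proof -
  obtain x where x: "x \<in> L" "length x = Suc n" "u = take n x" "w = drop 1 x"
    using assms(2) unfolding rauzy_arc_def words_of_length_def by auto
  have "take n x \<in> L" using assms(1) x(1) unfolding factorial_lang_def
    by (metis append_Nil append_take_drop_id)
  moreover have "drop 1 x \<in> L" using assms(1) x(1) unfolding factorial_lang_def
    by (metis append_Nil2 append_take_drop_id)
  ultimately show ?thesis using x unfolding words_of_length_def by auto
qed

lemma succ_prop: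
  assumes "card (outs L n u) = 1"
  shows "rauzy_arc L n u (succ L n u)" "\<And>w. rauzy_arc L n u w \<Longrightarrow> w = succ L n u"
proof -
  obtain w0 where w0: "outs L n u = {w0}" using assms card_1_singletonE by blast
  hence ex: "\<And>w. rauzy_arc L n u w \<longleftrightarrow> w = w0" unfolding outs_def by auto
  hence "succ L n u = w0" unfolding succ_def by auto
  thus "rauzy_arc L n u (succ L n u)" using ex by auto
  show "\<And>w. rauzy_arc L n u w \<Longrightarrow> w = succ L n u" using ex \<open>succ L n u = w0\<close> by auto
qed

lemma pred_prop:
  assumes "card (ins L n w) = 1"
  shows "rauzy_arc L n (pred L n w) w" "\<And>u. rauzy_arc L n u w \<Longrightarrow> u = pred L n w"
proof -
  obtain w0 where w0: "ins L n w = {w0}" using assms card_1_singletonE by blast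
  hence ex: "\<And>u. rauzy_arc L n u w \<longleftrightarrow> u = w0" unfolding ins_def by auto
  hence "pred L n w = w0" unfolding pred_def by auto
  thus "rauzy_arc L n (pred L n w) w" using ex by auto
  show "\<And>u. rauzy_arc L n u w \<Longrightarrow> u = pred L n w" using ex \<open>pred L n w = w0\<close> by auto
qed

lemma ball_mono: "m \<le> r \<Longrightarrow> rauzy_ball L n v m \<subseteq> rauzy_ball L n v r"
  unfolding rauzy_ball_def using le_trans by blast



lemma path_lemma:
  assumes good: "\<And>u. u \<in> rauzy_ball L n v r \<Longrightarrow> good L n u"
  and noper: "\<And>u d. u \<in> rauzy_ball L n v r \<Longrightarrow> 1 \<le> d \<Longrightarrow> d \<le> 2*r+1 \<Longrightarrow>
       \<not>(\<forall>k. k + d < n \<longrightarrow> u!k = u!(k+d))"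
  shows "ball_is_path L n v r"
proof -
  let ?N = "nbr L n" and ?S = "succ L n" and ?P = "pred L n"
  define f where "f i = (if i \<ge> 0 then (?S^^nat i) v else (?P^^nat(-i)) v)" for i :: int
  have inball: "(v, x) \<in> ?N^^m \<Longrightarrow> m \<le> r \<Longrightarrow> x \<in> rauzy_ball L n v r" for x m
    unfolding ball_def2 by blast
  have sreach: "m \<le> r \<Longrightarrow> (v, (?S^^m) v) \<in> ?N^^m" for m
  proof (induction m)
    case 0 then show ?case by simp
  next
    case (Suc m)
    let ?x = "(?S^^m) v"
    have h: "(v, ?x) \<in> ?N^^m" using Suc by simp
    hence "good L n ?x" using good inball Suc.prems by simp
    hence "rauzy_arc L n ?x (?S ?x)" using succ_prop good_def by blast
    hence "(?x, ?S ?x) \<in> ?N" unfolding nbr_def by simp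
    with h show ?case by auto
  qed
  have preach: "m \<le> r \<Longrightarrow> (v, (?P^^m) v) \<in> ?N^^m" for m
  proof (induction m)
    case 0 then show ?case by simp
  next
    case (Suc m)
    let ?x = "(?P^^m) v"
    have h: "(v, ?x) \<in> ?N^^m" using Suc by simp
    hence "good L n ?x" using good inball Suc.prems by simp
    hence "rauzy_arc L n (?P ?x) ?x" using pred_prop good_def by blast
    hence "(?x, ?P ?x) \<in> ?N" unfolding nbr_def by simp
    with h show ?case by auto
  qed
  have fball: "\<bar>i\<bar> \<le> int r \<Longrightarrow> f i \<in> rauzy_ball L n v r" for i
  proof (cases "i \<ge> 0")
    case True
    assume "\<bar>i\<bar> \<le> int r"
    hence "nat i \<le> r" using True by simp
    hence "(v, (?S^^nat i) v) \<in> ?N^^(nat i)" using sreach by blast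
    hence "(?S^^nat i) v \<in> rauzy_ball L n v r" using inball \<open>nat i \<le> r\<close> by blast
    thus ?thesis using True unfolding f_def by simp
  next
    case False
    assume "\<bar>i\<bar> \<le> int r"
    hence "nat (-i) \<le> r" using False by simp
    hence "(v, (?P^^nat (-i)) v) \<in> ?N^^(nat (-i))" using preach by blast
    hence "(?P^^nat (-i)) v \<in> rauzy_ball L n v r" using inball \<open>nat (-i) \<le> r\<close> by blast
    thus ?thesis using False unfolding f_def by simp
  qed
  have fgood: "\<bar>i\<bar> \<le> int r \<Longrightarrow> good L n (f i)" for i using fball good by blast
  have farc: "- int r \<le> i \<Longrightarrow> i \<le> int r \<Longrightarrow> rauzy_arc L n (f i) (f (i+1))" for i
  proof (cases "i \<ge> 0")
    case True
    assume a: "- int r \<le> i" "i \<le> int r"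
    have "f (i+1) = ?S (f i)" using True unfolding f_def
      by (simp add: nat_add_distrib)
    moreover have "good L n (f i)" using fgood a by simp
    ultimately show ?thesis using succ_prop(1)[of L n "f i"] unfolding good_def by simp
  next
    case False
    assume a: "- int r \<le> i" "i \<le> int r"
    have "f i = ?P (f (i+1))"
    proof (cases "i + 1 = 0")
      case True
      hence "nat (-i) = Suc 0" by simp
      thus ?thesis using False True unfolding f_def by simp
    next
      case F2: False
      hence "nat (-i) = Suc (nat (-(i+1)))" using False by simp
      thus ?thesis using False F2 unfolding f_def by simp
    qed
    moreover have "good L n (f (i+1))" using fgood a False by simp
    ultimately show ?thesis using pred_prop(1)[of L n "f (i+1)"] unfolding good_def by simp
  qed
  have fiff: "\<bar>i\<bar> \<le> int r \<Longrightarrow> rauzy_arc L n (f i) x \<longleftrightarrow> x = f (i+1)" for i x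
  proof -
    assume ir: "\<bar>i\<bar> \<le> int r"
    have c: "card (outs L n (f i)) = 1" using fgood[OF ir] unfolding good_def by simp
    have a: "rauzy_arc L n (f i) (f (i+1))" using farc ir by simp
    have e: "\<And>x. rauzy_arc L n (f i) x \<Longrightarrow> x = ?S (f i)" using succ_prop(2)[OF c] .
    have e2: "f (i+1) = ?S (f i)" using e[OF a] .
    show ?thesis
    proof
      assume "rauzy_arc L n (f i) x" thus "x = f (i+1)" using e e2 by simp
    next
      assume "x = f (i+1)" thus "rauzy_arc L n (f i) x" using a by simp
    qed
  qed
  have fcov: "k \<le> r \<Longrightarrow> (v, w) \<in> ?N^^k \<Longrightarrow> \<exists>i. \<bar>i\<bar> \<le> int k \<and> w = f i" for k w
  proof (induction k arbitrary: w)
    case 0 then show ?case by (auto simp: f_def intro: exI[of _ 0])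
  next
    case (Suc k)
    then obtain y where y: "(v, y) \<in> ?N^^k" "(y, w) \<in> ?N" by auto
    then obtain i where i: "\<bar>i\<bar> \<le> int k" "y = f i" using Suc by auto
    have ir: "\<bar>i\<bar> \<le> int r" using i Suc.prems by simp
    from y(2) have "rauzy_arc L n y w \<or> rauzy_arc L n w y" unfolding nbr_def by simp
    thus ?case
    proof
      assume "rauzy_arc L n y w"
      hence "w = f (i+1)" using fiff ir i by simp
      thus ?thesis using i by (intro exI[of _ "i+1"]) auto
    next
      assume a: "rauzy_arc L n w y"
      have "good L n y" using fgood ir i by simp
      hence "w = ?P y" using a pred_prop(2)[of L n y w] unfolding good_def by simp
      moreover have "rauzy_arc L n (f (i - 1)) (f i)" using farc[of "i-1"] ir Suc.prems i by simp
      hence "f (i - 1) = ?P y" using \<open>good L n y\<close> pred_prop(2)[of L n "f i" "f (i - 1)"] i unfolding good_def by simp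
      ultimately show ?thesis using i by (intro exI[of _ "i-1"]) auto
    qed
  qed
  have inj: "inj_on f {- int r .. int r + 1}"
  proof (rule ccontr)
    assume "\<not> ?thesis"
    then obtain i j where ij: "i \<in> {- int r .. int r + 1}" "j \<in> {- int r .. int r + 1}" "i < j" "f i = f j"
      unfolding inj_on_def by (metis linorder_neqE)
    have per: "i + int m \<le> j \<Longrightarrow> k + m < n \<Longrightarrow> f (i + int m) ! k = f i ! (k + m)" for m k
    proof (induction m arbitrary: k)
      case 0 then show ?case by simp
    next
      case (Suc m)
      have "rauzy_arc L n (f (i + int m)) (f (i + int m + 1))"
        using farc[of "i + int m"] ij Suc.prems by simp
      hence "f (i + int m + 1) ! k = f (i + int m) ! Suc k"
        using arc_nth Suc.prems by fastforce
      also have "\<dots> = f i ! (Suc k + m)" using Suc by simp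
      finally show ?case by (simp add: add.commute add.left_commute)
    qed
    define d where "d = nat (j - i)"
    have d: "1 \<le> d" "d \<le> 2*r+1" "i + int d = j" using ij unfolding d_def by auto
    have "\<bar>i\<bar> \<le> int r" using ij by auto
    hence "f i \<in> rauzy_ball L n v r" using fball by blast
    moreover have "\<forall>k. k + d < n \<longrightarrow> f i ! k = f i ! (k + d)"
      using per[of d] d ij by auto
    ultimately show False using noper d by blast
  qed
  have img: "f ` {- int r .. int r} = rauzy_ball L n v r"
  proof
    show "f ` {- int r..int r} \<subseteq> rauzy_ball L n v r" using fball by auto
    show "rauzy_ball L n v r \<subseteq> f ` {- int r..int r}"
    proof
      fix w assume "w \<in> rauzy_ball L n v r"
      then obtain k where "k \<le> r" "(v, w) \<in> ?N^^k" unfolding ball_def2 by auto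
      then obtain i where "\<bar>i\<bar> \<le> int k" "w = f i" using fcov by blast
      thus "w \<in> f ` {- int r..int r}" using \<open>k \<le> r\<close> by force
    qed
  qed
  have "bij_betw f {- int r .. int r} (rauzy_ball L n v r)"
    using img inj unfolding bij_betw_def by (auto intro: inj_on_subset)
  moreover have "f 0 = v" unfolding f_def by simp
  moreover have "\<forall>i \<in> {- int r .. int r}. \<forall>j \<in> {- int r .. int r}.
            rauzy_arc L n (f i) (f j) \<longleftrightarrow> j = i + 1"
  proof (intro ballI)
    fix i j assume i: "i \<in> {- int r .. int r}" and j: "j \<in> {- int r .. int r}"
    have "\<bar>i\<bar> \<le> int r" using i by auto
    hence "rauzy_arc L n (f i) (f j) \<longleftrightarrow> f j = f (i+1)" using fiff by blast
    also have "\<dots> \<longleftrightarrow> j = i + 1" using inj i j unfolding inj_on_def by auto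
    finally show "rauzy_arc L n (f i) (f j) \<longleftrightarrow> j = i + 1" .
  qed
  ultimately show ?thesis unfolding ball_is_path_def by blast
qed



lemma nbr_sym: "(x, y) \<in> nbr L n \<Longrightarrow> (y, x) \<in> nbr L n"
  unfolding nbr_def by auto

lemma relpow_sym: "(x, y) \<in> nbr L n ^^ k \<Longrightarrow> (y, x) \<in> nbr L n ^^ k"
proof (induction k arbitrary: y)
  case 0 then show ?case by simp
next
  case (Suc k)
  then obtain z where "(x, z) \<in> nbr L n ^^ k" "(z, y) \<in> nbr L n" by (auto elim: relpow_Suc_E)
  thus ?case using Suc.IH nbr_sym relpow_Suc_I2 by metis
qed

lemma ball_sym: "u \<in> rauzy_ball L n v r \<Longrightarrow> v \<in> rauzy_ball L n u r"
  unfolding ball_def2 using relpow_sym by blast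

lemma nbr_image:
  assumes "L \<subseteq> lists A"
  shows "nbr L n `` {x} \<subseteq> (\<lambda>a. drop 1 (x @ [a])) ` A \<union> (\<lambda>a. take n (a # x)) ` A"
proof
  fix w assume "w \<in> nbr L n `` {x}"
  hence "rauzy_arc L n x w \<or> rauzy_arc L n w x" unfolding nbr_def by auto
  thus "w \<in> (\<lambda>a. drop 1 (x @ [a])) ` A \<union> (\<lambda>a. take n (a # x)) ` A"
  proof
    assume "rauzy_arc L n x w"
    then obtain y where y: "y \<in> L" "length y = Suc n" "x = take n y" "w = drop 1 y"
      unfolding rauzy_arc_def words_of_length_def by auto
    have "drop n y = [y ! n]" using y(2)
      by (metis Cons_nth_drop_Suc drop_all lessI order_refl)
    hence "y = x @ [y ! n]" using y(3) by (metis append_take_drop_id)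
    moreover have "y ! n \<in> A" using y(1,2) assms by (auto simp: in_lists_conv_set)
    ultimately show ?thesis using y(4) by (metis UnI1 image_eqI)
  next
    assume "rauzy_arc L n w x"
    then obtain y where y: "y \<in> L" "length y = Suc n" "w = take n y" "x = drop 1 y"
      unfolding rauzy_arc_def words_of_length_def by auto
    have "y = y ! 0 # x" using y(2,4) by (cases y) auto
    moreover have "y ! 0 \<in> A" using y(1,2) assms by (auto simp: in_lists_conv_set)
    ultimately show ?thesis using y(3) by (metis UnI2 image_eqI)
  qed
qed

lemma nbr_card:
  assumes "L \<subseteq> lists A" "finite A"
  shows "finite (nbr L n `` {x}) \<and> card (nbr L n `` {x}) \<le> 2 * card A"
proof -
  let ?S = "(\<lambda>a. drop 1 (x @ [a])) ` A \<union> (\<lambda>a. take n (a # x)) ` A"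
  have f: "finite ?S" using assms by simp
  have "card ?S \<le> card A + card A"
    by (rule order_trans[OF card_Un_le add_mono[OF card_image_le card_image_le]]) (use assms in auto)
  thus ?thesis using card_mono[OF f nbr_image[OF assms(1)]] finite_subset[OF nbr_image[OF assms(1)] f] by simp
qed

lemma relpow_card:
  assumes "L \<subseteq> lists A" "finite A"
  shows "finite ((nbr L n ^^ k) `` {b}) \<and> card ((nbr L n ^^ k) `` {b}) \<le> (2 * card A) ^ k"
proof (induction k)
  case 0 then show ?case by simp
next
  case (Suc k)
  let ?X = "(nbr L n ^^ k) `` {b}"
  have eq: "(nbr L n ^^ Suc k) `` {b} = (\<Union>x\<in>?X. nbr L n `` {x})"
    by auto
  have fin: "finite (\<Union>x\<in>?X. nbr L n `` {x})" using Suc nbr_card[OF assms] by auto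
  have "card (\<Union>x\<in>?X. nbr L n `` {x}) \<le> (\<Sum>x\<in>?X. card (nbr L n `` {x}))"
    using card_UN_le Suc by blast
  also have "\<dots> \<le> (\<Sum>x\<in>?X. 2 * card A)" by (rule sum_mono) (use nbr_card[OF assms] in auto)
  also have "\<dots> = card ?X * (2 * card A)" by simp
  also have "\<dots> \<le> (2 * card A) ^ k * (2 * card A)" using Suc by simp
  finally show ?case using eq fin by (simp add: mult.commute)
qed

definition ballC :: "'a set \<Rightarrow> nat \<Rightarrow> nat" where
  "ballC A r = (\<Sum>k\<le>r. (2 * card A) ^ k)"

lemma ball_card:
  assumes "L \<subseteq> lists A" "finite A"
  shows "finite (rauzy_ball L n b r) \<and> card (rauzy_ball L n b r) \<le> ballC A r"
proof -
  have eq: "rauzy_ball L n b r = (\<Union>k\<in>{..r}. (nbr L n ^^ k) `` {b})"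
    unfolding ball_def2 by auto
  have "card (\<Union>k\<in>{..r}. (nbr L n ^^ k) `` {b}) \<le> (\<Sum>k\<le>r. card ((nbr L n ^^ k) `` {b}))"
    using card_UN_le by blast
  also have "\<dots> \<le> ballC A r" unfolding ballC_def by (rule sum_mono) (use relpow_card[OF assms] in auto)
  finally show ?thesis using eq relpow_card[OF assms] by auto
qed

lemma near_card:
  assumes "L \<subseteq> lists A" "finite A" "finite S"
  shows "card {v \<in> V. \<exists>u\<in>S. u \<in> rauzy_ball L n v r} \<le> card S * ballC A r"
proof -
  have "{v \<in> V. \<exists>u\<in>S. u \<in> rauzy_ball L n v r} \<subseteq> (\<Union>u\<in>S. rauzy_ball L n u r)"
    using ball_sym by fastforce
  moreover have "finite (\<Union>u\<in>S. rauzy_ball L n u r)" using assms ball_card[OF assms(1,2)] by auto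
  ultimately have "card {v \<in> V. \<exists>u\<in>S. u \<in> rauzy_ball L n v r} \<le> card (\<Union>u\<in>S. rauzy_ball L n u r)"
    by (rule card_mono[rotated])
  also have "\<dots> \<le> (\<Sum>u\<in>S. card (rauzy_ball L n u r))" using card_UN_le assms by blast
  also have "\<dots> \<le> (\<Sum>u\<in>S. ballC A r)" by (rule sum_mono) (use ball_card[OF assms(1,2)] in auto)
  finally show ?thesis by simp
qed



lemma count_abs:
  assumes "finite V" "finite X" "g ` X \<subseteq> V"
  shows "card {u\<in>V. card {x\<in>X. g x = u} \<noteq> 1} + 2 * card {u\<in>V. \<exists>x\<in>X. g x = u} \<le> card V + card X"
proof -
  let ?F = "\<lambda>u. {x\<in>X. g x = u}"
  have X: "X = (\<Union>u\<in>V. ?F u)" using assms(3) by auto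
  have cX: "card X = (\<Sum>u\<in>V. card (?F u))"
    by (subst X, rule card_UN_disjoint) (use assms in auto)
  have c1: "card {u\<in>V. card (?F u) \<noteq> 1} = (\<Sum>u\<in>V. if card (?F u) \<noteq> 1 then 1 else 0)"
    using sum.inter_filter[OF assms(1), of "\<lambda>_. (1::nat)"] by simp
  have c2': "card {u\<in>V. \<exists>x\<in>X. g x = u} = (\<Sum>u\<in>V. if \<exists>x\<in>X. g x = u then 1 else 0)"
    using sum.inter_filter[OF assms(1), of "\<lambda>_. (1::nat)" "\<lambda>u. \<exists>x\<in>X. g x = u"] by simp
  have "(\<Sum>u\<in>V. if \<exists>x\<in>X. g x = u then 1 else 0) = (\<Sum>u\<in>V. if ?F u \<noteq> {} then (1::nat) else 0)"
    by (rule sum.cong) auto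
  with c2' have c2: "card {u\<in>V. \<exists>x\<in>X. g x = u} = (\<Sum>u\<in>V. if ?F u \<noteq> {} then 1 else 0)" by simp
  have pt: "(if card (?F u) \<noteq> 1 then 1 else 0) + 2 * (if ?F u \<noteq> {} then 1 else 0) \<le> 1 + card (?F u)" for u
  proof -
    have fin: "finite (?F u)" using assms by simp
    show ?thesis
    proof (cases "?F u = {}")
      case True thus ?thesis by simp
    next
      case False
      hence "card (?F u) \<ge> 1" using fin by (simp add: Suc_le_eq card_gt_0_iff)
      thus ?thesis using False by auto
    qed
  qed
  have "(\<Sum>u\<in>V. (if card (?F u) \<noteq> 1 then 1 else 0) + 2 * (if ?F u \<noteq> {} then 1 else 0)) \<le> (\<Sum>u\<in>V. 1 + card (?F u))"
    by (rule sum_mono) (rule pt)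
  moreover have "(\<Sum>u\<in>V. (if card (?F u) \<noteq> 1 then 1 else 0) + 2 * (if ?F u \<noteq> {} then 1 else 0))
     = (\<Sum>u\<in>V. if card (?F u) \<noteq> 1 then 1 else 0) + 2 * (\<Sum>u\<in>V. if ?F u \<noteq> {} then 1 else (0::nat))"
    by (simp only: sum.distrib sum_distrib_left)
  moreover have "(\<Sum>u\<in>V. 1 + card (?F u)) = card V + (\<Sum>u\<in>V. card (?F u))"
    by (simp only: sum.distrib) simp
  ultimately show ?thesis unfolding c1 c2 cX by linarith
qed

lemma W_finite:
  assumes "L \<subseteq> lists A" "finite A"
  shows "finite (W L n)"
proof -
  have "W L n \<subseteq> {xs. set xs \<subseteq> A \<and> length xs = n}" using assms(1) unfolding words_of_length_def by auto
  thus ?thesis using finite_lists_length_eq[OF assms(2)] finite_subset by blast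
qed

lemma take_in: "factorial_lang L \<Longrightarrow> x \<in> W L (Suc n) \<Longrightarrow> take n x \<in> W L n"
  unfolding words_of_length_def factorial_lang_def by (auto, metis append_Nil append_take_drop_id)

lemma drop_in: "factorial_lang L \<Longrightarrow> x \<in> W L (Suc n) \<Longrightarrow> drop 1 x \<in> W L n"
  unfolding words_of_length_def factorial_lang_def by (auto, metis append_Nil2 append_take_drop_id)

lemma outs_card:
  assumes "n \<ge> 1"
  shows "card (outs L n u) = card {x\<in>W L (Suc n). take n x = u}"
proof -
  have "outs L n u = drop 1 ` {x\<in>W L (Suc n). take n x = u}"
    unfolding outs_def rauzy_arc_def by auto
  moreover have "inj_on (drop 1) {x\<in>W L (Suc n). take n x = u}"
  proof (rule inj_onI)
    fix x y assume x: "x \<in> {x\<in>W L (Suc n). take n x = u}" and y: "y \<in> {x\<in>W L (Suc n). take n x = u}"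
      and e: "drop 1 x = drop 1 y"
    have "take 1 x = take 1 y" using x y assms by (metis (mono_tags, lifting) mem_Collect_eq min_def take_take)
    thus "x = y" using e by (metis append_take_drop_id)
  qed
  ultimately show ?thesis by (simp add: card_image)
qed

lemma ins_card:
  assumes "n \<ge> 1"
  shows "card (ins L n u) = card {x\<in>W L (Suc n). drop 1 x = u}"
proof -
  have "ins L n u = take n ` {x\<in>W L (Suc n). drop 1 x = u}"
    unfolding ins_def rauzy_arc_def by auto
  moreover have "inj_on (take n) {x\<in>W L (Suc n). drop 1 x = u}"
  proof (rule inj_onI)
    fix x y assume x: "x \<in> {x\<in>W L (Suc n). drop 1 x = u}" and y: "y \<in> {x\<in>W L (Suc n). drop 1 x = u}"
      and e: "take n x = take n y"
    have "take 1 x = take 1 y" using e assms by (metis min_def take_take)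
    thus "x = y" using x y by (metis (mono_tags, lifting) mem_Collect_eq append_take_drop_id)
  qed
  ultimately show ?thesis by (simp add: card_image)
qed

lemma rp_iff:
  assumes "L \<subseteq> lists A" "u \<in> W L n"
  shows "right_prolongable A L u \<longleftrightarrow> (\<exists>x\<in>W L (Suc n). take n x = u)"
proof
  assume "right_prolongable A L u"
  then obtain a where "a \<in> A" "u @ [a] \<in> L" unfolding right_prolongable_def by auto
  thus "\<exists>x\<in>W L (Suc n). take n x = u" using assms(2)
    by (intro bexI[of _ "u @ [a]"]) (auto simp: words_of_length_def)
next
  assume "\<exists>x\<in>W L (Suc n). take n x = u"
  then obtain x where x: "x \<in> L" "length x = Suc n" "take n x = u" unfolding words_of_length_def by auto
  have "drop n x = [x ! n]" using x(2) by (metis Cons_nth_drop_Suc drop_all lessI order_refl)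
  hence "x = u @ [x ! n]" using x(3) by (metis append_take_drop_id)
  moreover have "x ! n \<in> A" using x assms by (auto simp: in_lists_conv_set)
  ultimately show "right_prolongable A L u" using x(1) unfolding right_prolongable_def by metis
qed

lemma lp_iff:
  assumes "L \<subseteq> lists A" "u \<in> W L n"
  shows "left_prolongable A L u \<longleftrightarrow> (\<exists>x\<in>W L (Suc n). drop 1 x = u)"
proof
  assume "left_prolongable A L u"
  then obtain a where "a \<in> A" "a # u \<in> L" unfolding left_prolongable_def by auto
  thus "\<exists>x\<in>W L (Suc n). drop 1 x = u" using assms(2)
    by (intro bexI[of _ "a # u"]) (auto simp: words_of_length_def)
next
  assume "\<exists>x\<in>W L (Suc n). drop 1 x = u"
  then obtain x where x: "x \<in> L" "length x = Suc n" "drop 1 x = u" unfolding words_of_length_def by auto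
  have "x = x ! 0 # u" using x(2,3) by (cases x) auto
  moreover have "x ! 0 \<in> A" using x assms by (auto simp: in_lists_conv_set)
  ultimately show "left_prolongable A L u" using x(1) unfolding left_prolongable_def by metis
qed

lemma bad_out_count:
  assumes "L \<subseteq> lists A" "finite A" "factorial_lang L" "n \<ge> 1"
  shows "card {u\<in>W L n. card (outs L n u) \<noteq> 1} + 2 * card {u\<in>W L n. right_prolongable A L u}
     \<le> complexity L n + complexity L (Suc n)"
proof -
  have "card {u\<in>W L n. card {x\<in>W L (Suc n). take n x = u} \<noteq> 1} + 2 * card {u\<in>W L n. \<exists>x\<in>W L (Suc n). take n x = u}
     \<le> card (W L n) + card (W L (Suc n))"
    by (rule count_abs) (use W_finite[OF assms(1,2)] take_in[OF assms(3)] in auto)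
  moreover have "{u\<in>W L n. card (outs L n u) \<noteq> 1} = {u\<in>W L n. card {x\<in>W L (Suc n). take n x = u} \<noteq> 1}"
    by (rule Collect_cong) (simp add: outs_card[OF assms(4)])
  moreover have "{u\<in>W L n. right_prolongable A L u} = {u\<in>W L n. \<exists>x\<in>W L (Suc n). take n x = u}"
    using rp_iff[OF assms(1)] by auto
  ultimately show ?thesis unfolding complexity_def by simp
qed

lemma bad_in_count:
  assumes "L \<subseteq> lists A" "finite A" "factorial_lang L" "n \<ge> 1"
  shows "card {u\<in>W L n. card (ins L n u) \<noteq> 1} + 2 * card {u\<in>W L n. left_prolongable A L u}
     \<le> complexity L n + complexity L (Suc n)"
proof -
  have "card {u\<in>W L n. card {x\<in>W L (Suc n). drop 1 x = u} \<noteq> 1} + 2 * card {u\<in>W L n. \<exists>x\<in>W L (Suc n). drop 1 x = u}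
     \<le> card (W L n) + card (W L (Suc n))"
    by (rule count_abs) (use W_finite[OF assms(1,2)] drop_in[OF assms(3)] in auto)
  moreover have "{u\<in>W L n. card (ins L n u) \<noteq> 1} = {u\<in>W L n. card {x\<in>W L (Suc n). drop 1 x = u} \<noteq> 1}"
    by (rule Collect_cong) (simp add: ins_card[OF assms(4)])
  moreover have "{u\<in>W L n. left_prolongable A L u} = {u\<in>W L n. \<exists>x\<in>W L (Suc n). drop 1 x = u}"
    using lp_iff[OF assms(1)] by auto
  ultimately show ?thesis unfolding complexity_def by simp
qed

definition per_set :: "'a list set \<Rightarrow> nat \<Rightarrow> nat \<Rightarrow> 'a list set" where
  "per_set L n r = {u \<in> W L n. \<exists>d. 1 \<le> d \<and> d \<le> 2*r+1 \<and> (\<forall>k. k + d < n \<longrightarrow> u!k = u!(k+d))}"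

lemma periodic_mod:
  assumes "\<forall>k. k + d < n \<longrightarrow> u!k = u!(k+d)" "1 \<le> d"
  shows "k < n \<Longrightarrow> u ! k = u ! (k mod d)"
proof (induction k rule: less_induct)
  case (less k)
  show ?case
  proof (cases "k < d")
    case True thus ?thesis by simp
  next
    case False
    hence "u ! (k - d) = u ! k" using assms(1) less.prems by (metis le_add_diff_inverse2 not_less)
    moreover have "u ! (k - d) = u ! ((k - d) mod d)" using less False assms(2) by simp
    moreover have "(k - d) mod d = k mod d" using False by (simp add: mod_if)
    ultimately show ?thesis by simp
  qed
qed

lemma per_card:
  assumes "L \<subseteq> lists A" "finite A" "2*r+1 \<le> n"
  shows "card (per_set L n r) \<le> (\<Sum>d\<in>{1..2*r+1}. card A ^ d)"
proof -
  define ext where "ext d s = map (\<lambda>k. s ! (k mod d)) [0..<n]" for d :: nat and s :: "'a list"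
  define T where "T d = {s. set s \<subseteq> A \<and> length s = d}" for d
  have sub: "per_set L n r \<subseteq> (\<Union>d\<in>{1..2*r+1}. ext d ` T d)"
  proof
    fix u assume "u \<in> per_set L n r"
    then obtain d where u: "u \<in> W L n" "1 \<le> d" "d \<le> 2*r+1" "\<forall>k. k + d < n \<longrightarrow> u!k = u!(k+d)"
      unfolding per_set_def by auto
    have len: "length u = n" using u(1) unfolding words_of_length_def by auto
    have dn: "d \<le> n" using u(3) assms(3) by simp
    have "u = ext d (take d u)"
    proof (rule nth_equalityI)
      show "length u = length (ext d (take d u))" using len unfolding ext_def by simp
      fix k assume "k < length u"
      hence k: "k < n" using len by simp
      have "k mod d < d" using u(2) by simp
      thus "u ! k = ext d (take d u) ! k" using periodic_mod[OF u(4) u(2) k] k unfolding ext_def by simp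
    qed
    moreover have "take d u \<in> T d" using u(1) assms(1) len dn unfolding T_def words_of_length_def
      by (auto simp: in_lists_conv_set dest: in_set_takeD)
    ultimately show "u \<in> (\<Union>d\<in>{1..2*r+1}. ext d ` T d)" using u(2,3) by auto
  qed
  have fT: "finite (T d)" for d unfolding T_def using finite_lists_length_eq[OF assms(2)] .
  have "card (per_set L n r) \<le> card (\<Union>d\<in>{1..2*r+1}. ext d ` T d)"
    by (rule card_mono[OF _ sub]) (use fT in auto)
  also have "\<dots> \<le> (\<Sum>d\<in>{1..2*r+1}. card (ext d ` T d))" by (rule card_UN_le) simp
  also have "\<dots> \<le> (\<Sum>d\<in>{1..2*r+1}. card A ^ d)"
  proof (rule sum_mono)
    fix d show "card (ext d ` T d) \<le> card A ^ d"
      using card_image_le[OF fT, of "ext d" d] card_lists_length_eq[OF assms(2), of d] unfolding T_def by simp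
  qed
  finally show ?thesis .
qed



lemma ball_in_V:
  assumes "factorial_lang L" "v \<in> W L n" "u \<in> rauzy_ball L n v r"
  shows "u \<in> W L n"
proof -
  obtain k where k: "(v, u) \<in> nbr L n ^^ k" using assms(3) unfolding ball_def2 by auto
  show ?thesis
  proof (cases k)
    case 0 thus ?thesis using k assms(2) by simp
  next
    case (Suc m)
    then obtain y where "(y, u) \<in> nbr L n" using k by (auto elim: relpow_Suc_E)
    thus ?thesis using arc_in[OF assms(1)] unfolding nbr_def by auto
  qed
qed

lemma NB_count:
  assumes "L \<subseteq> lists A" "finite A" "factorial_lang L" "2*r+1 \<le> n"
  shows "card {v\<in>W L n. \<not> ball_is_path L n v r} \<le>
    (card {u\<in>W L n. card (outs L n u) \<noteq> 1} + card {u\<in>W L n. card (ins L n u) \<noteq> 1}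
      + card (per_set L n r)) * ballC A r"
proof -
  let ?S = "{u\<in>W L n. card (outs L n u) \<noteq> 1} \<union> {u\<in>W L n. card (ins L n u) \<noteq> 1} \<union> per_set L n r"
  have fS: "finite ?S" using W_finite[OF assms(1,2)] unfolding per_set_def by auto
  have sub: "{v\<in>W L n. \<not> ball_is_path L n v r} \<subseteq> {v \<in> W L n. \<exists>u\<in>?S. u \<in> rauzy_ball L n v r}"
  proof
    fix v assume v: "v \<in> {v\<in>W L n. \<not> ball_is_path L n v r}"
    have "\<exists>u \<in> rauzy_ball L n v r. \<not> good L n u \<or> (\<exists>d. 1 \<le> d \<and> d \<le> 2*r+1 \<and> (\<forall>k. k + d < n \<longrightarrow> u!k = u!(k+d)))"
    proof (rule ccontr)
      assume "\<not> ?thesis"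
      hence "ball_is_path L n v r" by (intro path_lemma) auto
      thus False using v by simp
    qed
    then obtain u where u: "u \<in> rauzy_ball L n v r"
      "\<not> good L n u \<or> (\<exists>d. 1 \<le> d \<and> d \<le> 2*r+1 \<and> (\<forall>k. k + d < n \<longrightarrow> u!k = u!(k+d)))" by blast
    have uV: "u \<in> W L n" using ball_in_V[OF assms(3) _ u(1)] v by simp
    have "u \<in> ?S" using u(2) uV unfolding good_def per_set_def by auto
    thus "v \<in> {v \<in> W L n. \<exists>u\<in>?S. u \<in> rauzy_ball L n v r}" using u(1) v by auto
  qed
  have "card {v\<in>W L n. \<not> ball_is_path L n v r} \<le> card {v \<in> W L n. \<exists>u\<in>?S. u \<in> rauzy_ball L n v r}"
    by (rule card_mono[OF _ sub]) (use W_finite[OF assms(1,2)] in simp)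
  also have "\<dots> \<le> card ?S * ballC A r" by (rule near_card[OF assms(1,2) fS])
  also have "\<dots> \<le> (card {u\<in>W L n. card (outs L n u) \<noteq> 1} + card {u\<in>W L n. card (ins L n u) \<noteq> 1}
      + card (per_set L n r)) * ballC A r"
    by (rule mult_right_mono) (metis (no_types, lifting) card_Un_le add_mono order_trans le_refl, simp)
  finally show ?thesis .
qed



lemma p_lower:
  fixes p :: "nat \<Rightarrow> real" and \<alpha> :: real
  assumes "\<alpha> \<ge> 1" "(\<lambda>n. p n / real n powr \<alpha>) \<longlonglongrightarrow> 1"
  shows "eventually (\<lambda>n. p n \<ge> real n / 2 \<and> p n > 0) sequentially"
proof -
  have e1: "eventually (\<lambda>n. p n / real n powr \<alpha> > 1/2) sequentially"
    by (rule order_tendstoD(1)[OF assms(2)]) simp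
  have e2: "eventually (\<lambda>n. n \<ge> 1) sequentially" by (rule eventually_ge_at_top)
  show ?thesis using e1 e2
  proof eventually_elim
    case (elim n)
    have pos: "real n powr \<alpha> > 0" using elim(2) by simp
    have "real n powr 1 \<le> real n powr \<alpha>" by (rule powr_mono) (use assms elim in auto)
    hence ge: "real n \<le> real n powr \<alpha>" using elim(2) by simp
    have "p n > real n powr \<alpha> / 2" using elim(1) pos by (simp add: field_simps)
    thus ?case using ge elim(2) by (auto simp: field_simps)
  qed
qed

lemma const_over_p:
  fixes p :: "nat \<Rightarrow> real"
  assumes "eventually (\<lambda>n. p n \<ge> real n / 2 \<and> p n > 0) sequentially" "c \<ge> 0"
  shows "(\<lambda>n. c / p n) \<longlonglongrightarrow> 0"
proof (rule tendsto_sandwich[of "\<lambda>_. 0" _ _ "\<lambda>n. (2*c) / real n"])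
  show "eventually (\<lambda>n. 0 \<le> c / p n) sequentially" using assms(1)
    by eventually_elim (use assms(2) in auto)
  have e2: "eventually (\<lambda>n. n \<ge> 1) sequentially" by (rule eventually_ge_at_top)
  show "eventually (\<lambda>n. c / p n \<le> 2 * c / real n) sequentially" using assms(1) e2
  proof eventually_elim
    case (elim n)
    have "c / p n \<le> c / (real n / 2)"
      by (rule divide_left_mono) (use elim assms(2) in auto)
    thus ?case by (simp add: mult.commute)
  qed
  show "(\<lambda>_. 0::real) \<longlonglongrightarrow> 0" by simp
  show "(\<lambda>n. 2 * c / real n) \<longlonglongrightarrow> 0" by (rule lim_const_over_n)
qed

lemma ratio_lim:
  fixes p :: "nat \<Rightarrow> real" and \<alpha> :: real
  assumes "\<alpha> \<ge> 1" "(\<lambda>n. p n / real n powr \<alpha>) \<longlonglongrightarrow> 1"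
  shows "(\<lambda>n. p (Suc n) / p n) \<longlonglongrightarrow> 1"
proof -
  have l1: "(\<lambda>n. p (Suc n) / real (Suc n) powr \<alpha>) \<longlonglongrightarrow> 1" using LIMSEQ_Suc[OF assms(2)] by simp
  have l2: "(\<lambda>n. (real (Suc n) / real n) powr \<alpha>) \<longlonglongrightarrow> 1 powr \<alpha>"
    by (rule tendsto_powr[OF LIMSEQ_Suc_n_over_n tendsto_const]) simp
  have l: "(\<lambda>n. (p (Suc n) / real (Suc n) powr \<alpha>) * (real (Suc n) / real n) powr \<alpha> / (p n / real n powr \<alpha>))
     \<longlonglongrightarrow> 1 * 1 powr \<alpha> / 1"
    by (intro tendsto_mult tendsto_divide l1 l2 assms(2)) simp
  have ev: "eventually (\<lambda>n. (p (Suc n) / real (Suc n) powr \<alpha>) * (real (Suc n) / real n) powr \<alpha> / (p n / real n powr \<alpha>)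
     = p (Suc n) / p n) sequentially"
    using p_lower[OF assms] eventually_ge_at_top[of 1]
  proof eventually_elim
    case (elim n)
    have a: "real n powr \<alpha> > 0" "real (Suc n) powr \<alpha> > 0" using elim by auto
    show ?case using a elim(1) by (simp add: powr_divide field_simps)
  qed
  show ?thesis using Lim_transform_eventually[OF l ev] by simp
qed

lemma bad_ratio:
  fixes p R :: "nat \<Rightarrow> real"
  assumes "(\<lambda>n. p (Suc n) / p n) \<longlonglongrightarrow> 1" "(\<lambda>n. R n / p n) \<longlonglongrightarrow> 1"
    "eventually (\<lambda>n. p n > 0) sequentially"
  shows "(\<lambda>n. (p n + p (Suc n) - 2 * R n) / p n) \<longlonglongrightarrow> 0"
proof -
  have l: "(\<lambda>n. 1 + p (Suc n) / p n - 2 * (R n / p n)) \<longlonglongrightarrow> 1 + 1 - 2 * 1"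
    by (intro tendsto_intros assms(1,2))
  have ev: "eventually (\<lambda>n. 1 + p (Suc n) / p n - 2 * (R n / p n) = (p n + p (Suc n) - 2 * R n) / p n) sequentially"
    using assms(3) by eventually_elim (simp add: field_simps)
  show ?thesis using Lim_transform_eventually[OF l ev] by simp
qed

lemma card_split: "finite V \<Longrightarrow> card {v\<in>V. P v} + card {v\<in>V. \<not> P v} = card V"
proof -
  assume f: "finite V"
  have "card ({v\<in>V. P v} \<union> {v\<in>V. \<not> P v}) = card {v\<in>V. P v} + card {v\<in>V. \<not> P v}"
    by (rule card_Un_disjoint) (use f in auto)
  moreover have "{v\<in>V. P v} \<union> {v\<in>V. \<not> P v} = V" by auto
  ultimately show ?thesis by simp
qed

theorem corollary2p8:
  fixes A :: "'a set" and L :: "'a list set" and \<alpha> :: real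
  assumes "finite A"
    and "L \<subseteq> lists A"
    and "factorial_lang L"
    and "almost_prolongable A L"
    and "\<alpha> \<ge> 1"
    and "(\<lambda>n. real (complexity L n) / real n powr \<alpha>) \<longlonglongrightarrow> 1"
  shows "rauzy_converges_to_Z L"
  unfolding rauzy_converges_to_Z_def
proof
  fix r :: nat
  define p where "p n = real (complexity L n)" for n
  define R where "R n = real (card {v \<in> words_of_length L n. right_prolongable A L v})" for n
  define Lf where "Lf n = real (card {v \<in> words_of_length L n. left_prolongable A L v})" for n
  define Pc where "Pc = real (\<Sum>d\<in>{1..2*r+1}. card A ^ d)"
  define C where "C = real (ballC A r)"
  define G where "G n = real (card {v \<in> words_of_length L n. ball_is_path L n v r})" for n
  define NB where "NB n = real (card {v \<in> words_of_length L n. \<not> ball_is_path L n v r})" for n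
  have hp: "(\<lambda>n. p n / real n powr \<alpha>) \<longlonglongrightarrow> 1" using assms(6) unfolding p_def .
  have hR: "(\<lambda>n. R n / p n) \<longlonglongrightarrow> 1" and hL: "(\<lambda>n. Lf n / p n) \<longlonglongrightarrow> 1"
    using assms(4) unfolding almost_prolongable_def R_def Lf_def p_def by auto
  have pl: "eventually (\<lambda>n. p n \<ge> real n / 2 \<and> p n > 0) sequentially" by (rule p_lower[OF assms(5) hp])
  have ppos: "eventually (\<lambda>n. p n > 0) sequentially" using pl by eventually_elim simp
  have rat: "(\<lambda>n. p (Suc n) / p n) \<longlonglongrightarrow> 1" by (rule ratio_lim[OF assms(5) hp])
  have X: "(\<lambda>n. (p n + p (Suc n) - 2 * R n) / p n) \<longlonglongrightarrow> 0" by (rule bad_ratio[OF rat hR ppos])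
  have Y: "(\<lambda>n. (p n + p (Suc n) - 2 * Lf n) / p n) \<longlonglongrightarrow> 0" by (rule bad_ratio[OF rat hL ppos])
  have Z: "(\<lambda>n. Pc / p n) \<longlonglongrightarrow> 0" by (rule const_over_p[OF pl]) (simp only: Pc_def of_nat_0_le_iff)
  have up: "(\<lambda>n. C * ((p n + p (Suc n) - 2 * R n) / p n + (p n + p (Suc n) - 2 * Lf n) / p n + Pc / p n))
     \<longlonglongrightarrow> C * (0 + 0 + 0)"
    by (intro tendsto_intros X Y Z)
  have ev_bound: "eventually (\<lambda>n. 0 \<le> NB n / p n \<and> NB n / p n \<le>
      C * ((p n + p (Suc n) - 2 * R n) / p n + (p n + p (Suc n) - 2 * Lf n) / p n + Pc / p n)) sequentially"
    using ppos eventually_ge_at_top[of "2*r+1"] eventually_ge_at_top[of 1]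
  proof eventually_elim
    case (elim n)
    let ?Bo = "card {u\<in>words_of_length L n. card (outs L n u) \<noteq> 1}"
    let ?Bi = "card {u\<in>words_of_length L n. card (ins L n u) \<noteq> 1}"
    have nb0: "card {v\<in>words_of_length L n. \<not> ball_is_path L n v r} \<le> (?Bo + ?Bi + card (per_set L n r)) * ballC A r"
      by (rule NB_count[OF assms(2,1,3) elim(2)])
    hence "real (card {v\<in>words_of_length L n. \<not> ball_is_path L n v r}) \<le> real ((?Bo + ?Bi + card (per_set L n r)) * ballC A r)"
      by (simp only: of_nat_le_iff)
    hence nb: "NB n \<le> (real ?Bo + real ?Bi + real (card (per_set L n r))) * C"
      by (simp only: NB_def C_def of_nat_mult of_nat_add)
    have bo: "real ?Bo \<le> p n + p (Suc n) - 2 * R n"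
      using bad_out_count[OF assms(2,1,3) elim(3)] unfolding p_def R_def by linarith
    have bi: "real ?Bi \<le> p n + p (Suc n) - 2 * Lf n"
      using bad_in_count[OF assms(2,1,3) elim(3)] unfolding p_def Lf_def by linarith
    have pc: "real (card (per_set L n r)) \<le> Pc"
      using per_card[OF assms(2,1) elim(2)] unfolding Pc_def by linarith
    have C0: "C \<ge> 0" unfolding C_def by simp
    have "NB n \<le> C * ((p n + p (Suc n) - 2 * R n) + (p n + p (Suc n) - 2 * Lf n) + Pc)"
    proof -
      have "(real ?Bo + real ?Bi + real (card (per_set L n r))) * C \<le> ((p n + p (Suc n) - 2 * R n) + (p n + p (Suc n) - 2 * Lf n) + Pc) * C"
        by (rule mult_right_mono) (use bo bi pc C0 in linarith)+
      thus ?thesis using nb by (simp only: mult.commute)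
    qed
    hence "NB n / p n \<le> C * ((p n + p (Suc n) - 2 * R n) + (p n + p (Suc n) - 2 * Lf n) + Pc) / p n"
      using elim(1) by (simp add: divide_right_mono)
    also have "\<dots> = C * ((p n + p (Suc n) - 2 * R n) / p n + (p n + p (Suc n) - 2 * Lf n) / p n + Pc / p n)"
      using elim(1) by (simp add: field_simps)
    finally show ?case using elim(1) unfolding NB_def by simp
  qed
  have nb0: "(\<lambda>n. NB n / p n) \<longlonglongrightarrow> 0"
  proof (rule tendsto_sandwich[of "\<lambda>_. 0" _ _ "\<lambda>n. C * ((p n + p (Suc n) - 2 * R n) / p n + (p n + p (Suc n) - 2 * Lf n) / p n + Pc / p n)"])
    show "eventually (\<lambda>n. 0 \<le> NB n / p n) sequentially" using ev_bound by eventually_elim simp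
    show "eventually (\<lambda>n. NB n / p n \<le> C * ((p n + p (Suc n) - 2 * R n) / p n + (p n + p (Suc n) - 2 * Lf n) / p n + Pc / p n)) sequentially"
      using ev_bound by eventually_elim simp
    show "(\<lambda>_. 0::real) \<longlonglongrightarrow> 0" by simp
    show "(\<lambda>n. C * ((p n + p (Suc n) - 2 * R n) / p n + (p n + p (Suc n) - 2 * Lf n) / p n + Pc / p n)) \<longlonglongrightarrow> 0"
      using up by simp
  qed
  have l: "(\<lambda>n. 1 - NB n / p n) \<longlonglongrightarrow> 1 - 0" by (intro tendsto_intros nb0)
  have ev: "eventually (\<lambda>n. 1 - NB n / p n = G n / p n) sequentially" using ppos
  proof eventually_elim
    case (elim n)
    have "G n + NB n = p n" unfolding G_def NB_def p_def complexity_def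
      using card_split[OF W_finite[OF assms(2,1), of n], of "\<lambda>v. ball_is_path L n v r"]
      by (metis of_nat_add)
    thus ?case using elim by (simp add: field_simps)
  qed
  show "(\<lambda>n. real (card {v \<in> words_of_length L n. ball_is_path L n v r}) / real (complexity L n)) \<longlonglongrightarrow> 1"
    using Lim_transform_eventually[OF l ev] unfolding G_def p_def by simp
qed


end
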